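(* Let $\beta\in[0,1)$ and let $\lambda$ be a principal eigenvalue of $\Delta_\beta$. Then $\lambda\le1$. Moreover, if $\beta\in(0,\tfrac12]$, then $\lambda<1$.
   Context: Tree: for an integer $m\ge2$, $\mathbb{T}_m$ has vertices the root $\emptyset$ and all finite sequences $(\emptyset,a_1,\dots,a_k)$, $a_i\in\{0,\dots,m-1\}$; $|x|$ is the level, successors of $x$ are $(x,i)$, $\hat x$ is the immediate predecessor of $x\ne\emptyset$. A branch is an infinite sequence $(x_n)_{n\ge0}$ with $x_0=\emptyset$, $x_{n+1}$ a successor of $x_n$; $\partial\mathbb{T}_m$ is the set of branches; $\lim_{x\to y}u(x)=\lim_n u(x_n)$ for $y=(x_n)$. Operator: $p_\beta=1$ if $\beta=0$, $p_\beta=\beta/(1-\beta)$ if $\beta\in(0,1)$. $\Delta_\beta u(\emptyset)=\frac1m\sum_{i=0}^{m-1}u(\emptyset,i)-u(\emptyset)$ and, for $x\ne\emptyset$, $\Delta_\beta u(x)=\big(\beta u(\hat x)+\frac{1-\beta}{m}\sum_{i=0}^{m-1}u(x,i)-u(x)\big)p_\beta^{-|x|}$. Eigenvalues: $\lambda\in\mathbb{R}$ is an eigenvalue of $\Delta_\beta$ if there is a bounded $u:\mathbb{T}_m\to\mathbb{R}$, $u\not\equiv0$, with $-\Delta_\beta u=\lambda u$ on $\mathbb{T}_m$ and $\lim_{x\to y}u(x)=0$ for every $y\in\partial\mathbb{T}_m$. An eigenvalue $\lambda>0$ is principal if it has a non-negative eigenfunction. *)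

theory Defs
  imports Complex_Main
begin

text \<open>Vertices of the m-ary tree: finite sequences (a_1,...,a_k) with a_i < m,
  represented as lists; the root is [], the successors of x are x @ [i] (i < m),
  the predecessor of x is butlast x, the level is length x.\<close>

definition tree :: "nat \<Rightarrow> nat list set" where
  "tree m = {x. \<forall>a\<in>set x. a < m}"

definition branches :: "nat \<Rightarrow> (nat \<Rightarrow> nat list) set" where
  "branches m = {xs. xs 0 = [] \<and> (\<forall>n. \<exists>i<m. xs (Suc n) = xs n @ [i])}"

definition p_beta :: "real \<Rightarrow> real" where
  "p_beta \<beta> = (if \<beta> = 0 then 1 else \<beta> / (1 - \<beta>))"

definition Delta :: "nat \<Rightarrow> real \<Rightarrow> (nat list \<Rightarrow> real) \<Rightarrow> nat list \<Rightarrow> real" where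
  "Delta m \<beta> u x =
     (if x = [] then (1 / real m) * (\<Sum>i<m. u [i]) - u []
      else (\<beta> * u (butlast x) + ((1 - \<beta>) / real m) * (\<Sum>i<m. u (x @ [i])) - u x)
           * inverse (p_beta \<beta> ^ length x))"

definition is_eigenfunction :: "nat \<Rightarrow> real \<Rightarrow> real \<Rightarrow> (nat list \<Rightarrow> real) \<Rightarrow> bool" where
  "is_eigenfunction m \<beta> lam u \<longleftrightarrow>
     (\<exists>B. \<forall>x\<in>tree m. \<bar>u x\<bar> \<le> B) \<and>
     (\<exists>x\<in>tree m. u x \<noteq> 0) \<and>
     (\<forall>x\<in>tree m. - Delta m \<beta> u x = lam * u x) \<and>
     (\<forall>xs\<in>branches m. (\<lambda>n. u (xs n)) \<longlonglongrightarrow> 0)"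

definition is_eigenvalue :: "nat \<Rightarrow> real \<Rightarrow> real \<Rightarrow> bool" where
  "is_eigenvalue m \<beta> lam \<longleftrightarrow> (\<exists>u. is_eigenfunction m \<beta> lam u)"

definition is_principal_eigenvalue :: "nat \<Rightarrow> real \<Rightarrow> real \<Rightarrow> bool" where
  "is_principal_eigenvalue m \<beta> lam \<longleftrightarrow>
     lam > 0 \<and> (\<exists>u. is_eigenfunction m \<beta> lam u \<and> (\<forall>x\<in>tree m. u x \<ge> 0))"

end

theory Submission
  imports Defs
begin

lemma tree_app: "y @ [i] \<in> tree m \<longleftrightarrow> y \<in> tree m \<and> i < m"
  by (auto simp: tree_def)

lemma tree_butlast: "y \<in> tree m \<Longrightarrow> butlast y \<in> tree m"
  by (auto simp: tree_def dest: in_set_butlastD)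

lemma p_beta_pos: "0 \<le> \<beta> \<Longrightarrow> \<beta> < 1 \<Longrightarrow> p_beta \<beta> > 0"
  by (auto simp: p_beta_def)

lemma nz_step:
  assumes y: "y \<in> tree m" "y \<noteq> []" and uy: "u y = 0"
    and eq: "- Delta m \<beta> u y = lam * u y"
    and nn: "\<forall>x\<in>tree m. u x \<ge> 0" and b: "0 \<le> \<beta>" "\<beta> < 1" and m: "m > 0"
  shows "\<beta> * u (butlast y) = 0 \<and> (\<forall>i<m. u (y @ [i]) = 0)"
proof -
  let ?S = "\<Sum>i<m. u (y @ [i])"
  have ip: "inverse (p_beta \<beta> ^ length y) \<noteq> 0" using p_beta_pos[OF b] by simp
  from eq uy y have "(\<beta> * u (butlast y) + ((1 - \<beta>) / real m) * ?S) * inverse (p_beta \<beta> ^ length y) = 0"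
    by (simp add: Delta_def)
  with ip have e: "\<beta> * u (butlast y) + ((1 - \<beta>) / real m) * ?S = 0" using mult_eq_0_iff by blast
  have h1: "\<beta> * u (butlast y) \<ge> 0" using nn tree_butlast[OF y(1)] b by simp
  have Sn: "\<forall>i\<in>{..<m}. u (y @ [i]) \<ge> 0" using nn y(1) by (auto simp: tree_app)
  have "?S \<ge> 0" using Sn by (intro sum_nonneg) auto
  moreover have c: "(1 - \<beta>) / real m > 0" using b m by simp
  ultimately have h2: "((1 - \<beta>) / real m) * ?S \<ge> 0" by (intro mult_nonneg_nonneg) auto
  have "?S = 0" using e h1 h2 c by (smt (verit) mult_pos_pos mult_eq_0_iff)
  hence "\<forall>i\<in>{..<m}. u (y @ [i]) = 0" using Sn by (subst (asm) sum_nonneg_eq_0_iff) auto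
  thus ?thesis using e h1 h2 by auto
qed

lemma all_zero:
  assumes eqs: "\<forall>x\<in>tree m. - Delta m \<beta> u x = lam * u x"
    and nn: "\<forall>x\<in>tree m. u x \<ge> 0" and b: "0 \<le> \<beta>" "\<beta> < 1" and m: "m > 0"
    and r: "u [] = 0" and c: "\<forall>i<m. u [i] = 0"
  shows "\<forall>x\<in>tree m. u x = 0"
proof -
  have Q: "\<forall>x\<in>tree m. length x \<le> Suc n \<longrightarrow> u x = 0" for n
  proof (induction n)
    case 0
    show ?case
    proof (intro ballI impI)
      fix x assume x: "x \<in> tree m" "length x \<le> Suc 0"
      show "u x = 0"
      proof (cases x)
        case Nil thus ?thesis using r by simp
      next
        case (Cons a t)
        with x have "t = []" by simp
        with Cons x show ?thesis using c by (auto simp: tree_def)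
      qed
    qed
  next
    case (Suc n)
    show ?case
    proof (intro ballI impI)
      fix x assume x: "x \<in> tree m" "length x \<le> Suc (Suc n)"
      show "u x = 0"
      proof (cases "length x \<le> Suc n")
        case True thus ?thesis using Suc x by blast
      next
        case False
        hence "x \<noteq> []" by auto
        then obtain y i where xy: "x = y @ [i]" by (metis rev_exhaust)
        have yt: "y \<in> tree m" and im: "i < m" using x xy by (auto simp: tree_app)
        have ly: "length y = Suc n" using x xy False by simp
        hence yne: "y \<noteq> []" by auto
        have uy: "u y = 0" using Suc yt ly by simp
        have "\<forall>i<m. u (y @ [i]) = 0"
          using nz_step[OF yt yne uy _ nn b m] eqs yt by blast
        thus ?thesis using xy im by simp
      qed
    qed
  qed
  show ?thesis
  proof
    fix x assume "x \<in> tree m"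
    thus "u x = 0" using Q[of "length x"] by simp
  qed
qed

theorem lemma3p2:
  fixes m :: nat and \<beta> lam :: real
  assumes "m \<ge> 2" and "0 \<le> \<beta>" and "\<beta> < 1"
    and "is_principal_eigenvalue m \<beta> lam"
  shows "lam \<le> 1 \<and> (0 < \<beta> \<and> \<beta> \<le> 1/2 \<longrightarrow> lam < 1)"
proof -
  obtain u where ef: "is_eigenfunction m \<beta> lam u" and nn: "\<forall>x\<in>tree m. u x \<ge> 0"
    using assms(4) by (auto simp: is_principal_eigenvalue_def)
  have eqs: "\<forall>x\<in>tree m. - Delta m \<beta> u x = lam * u x"
    and nz: "\<exists>x\<in>tree m. u x \<noteq> 0" using ef by (auto simp: is_eigenfunction_def)
  have m: "m > 0" using assms(1) by simp
  have rt: "[] \<in> tree m" by (simp add: tree_def)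
  have ct: "\<forall>i<m. [i] \<in> tree m" by (simp add: tree_def)
  let ?S = "\<Sum>i<m. u [i]"
  have req: "(1 / real m) * ?S = (1 - lam) * u []"
    using eqs rt by (auto simp: Delta_def algebra_simps)
  have Sn: "\<forall>i\<in>{..<m}. u [i] \<ge> 0" using nn ct by auto
  have S0: "?S \<ge> 0" using Sn by (intro sum_nonneg) auto
  have u0: "u [] \<ge> 0" using nn rt by simp
  have key: "?S = 0 \<Longrightarrow> u [] = 0 \<Longrightarrow> False"
  proof -
    assume "?S = 0" "u [] = 0"
    hence "\<forall>i<m. u [i] = 0" using Sn by (subst (asm) sum_nonneg_eq_0_iff) auto
    hence "\<forall>x\<in>tree m. u x = 0" using all_zero[OF eqs nn assms(2,3) m \<open>u [] = 0\<close>] by blast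
    thus False using nz by blast
  qed
  have A: "lam \<le> 1"
  proof (rule ccontr)
    assume "\<not> lam \<le> 1"
    hence "(1 - lam) * u [] \<le> 0" using u0 by (simp add: mult_nonpos_nonneg)
    hence "(1 / real m) * ?S \<le> 0" using req by simp
    hence "?S \<le> 0" using m by (simp add: zero_le_mult_iff divide_le_0_iff mult_le_0_iff)
    hence S: "?S = 0" using S0 by simp
    hence "(1 - lam) * u [] = 0" using req by simp
    hence "u [] = 0" using \<open>\<not> lam \<le> 1\<close> by simp
    thus False using key S by blast
  qed
  have B: "lam < 1" if bp: "0 < \<beta>"
  proof (rule ccontr)
    assume "\<not> lam < 1"
    hence l1: "lam = 1" using A by simp
    hence S: "?S = 0" using req m by simp
    hence c0: "\<forall>i<m. u [i] = 0" using Sn by (subst (asm) sum_nonneg_eq_0_iff) auto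
    have t0: "[0] \<in> tree m" using ct m by simp
    have "\<beta> * u (butlast [0]) = 0"
      using nz_step[OF t0 _ _ _ nn assms(2,3) m] c0 m eqs t0 by auto
    hence "u [] = 0" using bp by simp
    thus False using key S by blast
  qed
  show ?thesis using A B by blast
qed

end
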